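(* Let $F$ be a field, $d\ge 2$ an integer and $\alpha\in F$. Identify the set of monic polynomials $x^d+\sum_{i=0}^{d-1}a_ix^i$ over $F$ with the affine space $F^d$ via $(a_0,\dots,a_{d-1})$. Let $\mathcal{P}\subseteq F^d$ be the set of monic polynomials of degree $d$ over $F$ that have a monic polynomial factor $q(x)$ of degree $m$ with $1\le m\le d-1$ whose constant term equals $\alpha$. Then $\mathcal{P}$ is contained in an affine hypersurface of $F^d$, i.e. there is a nonzero polynomial $H\in F[a_0,\dots,a_{d-1}]$ vanishing at every point of $\mathcal{P}$. *)

theory Defs
  imports "HOL-Library.Poly_Mapping" "HOL-Computational_Algebra.Polynomial"
begin

text \<open>Multivariate polynomials over a commutative ring, represented as finitely
supported maps from monomials (finitely supported exponent vectors
\<open>nat \<Rightarrow>\<^sub>0 nat\<close>, variable \<open>i\<close> being the coordinate \<open>a_i\<close>) to coefficients.\<close>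
type_synonym 'a mpoly = "(nat \<Rightarrow>\<^sub>0 nat) \<Rightarrow>\<^sub>0 'a"

definition mpoly_eval :: "'a::comm_semiring_1 mpoly \<Rightarrow> (nat \<Rightarrow> 'a) \<Rightarrow> 'a" where
  "mpoly_eval H a = (\<Sum>\<mu>\<in>Poly_Mapping.keys H. Poly_Mapping.lookup H \<mu> * (\<Prod>i\<in>Poly_Mapping.keys \<mu>. a i ^ Poly_Mapping.lookup \<mu> i))"

definition mpoly_in_vars :: "nat \<Rightarrow> 'a::zero mpoly \<Rightarrow> bool" where
  "mpoly_in_vars d H \<longleftrightarrow> (\<forall>\<mu>\<in>Poly_Mapping.keys H. Poly_Mapping.keys \<mu> \<subseteq> {..<d})"

definition monic_of :: "nat \<Rightarrow> (nat \<Rightarrow> 'a::comm_ring_1) \<Rightarrow> 'a poly" where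
  "monic_of d a = monom 1 d + (\<Sum>i<d. monom (a i) i)"

definition calP :: "nat \<Rightarrow> 'a::field \<Rightarrow> (nat \<Rightarrow> 'a) set" where
  "calP d \<alpha> = {a. (\<forall>i\<ge>d. a i = 0) \<and>
     (\<exists>q. q dvd monic_of d a \<and> lead_coeff q = 1 \<and> 1 \<le> degree q \<and> degree q \<le> d - 1
          \<and> coeff q 0 = \<alpha>)}"

end

theory Submission
  imports Defs "HOL-Library.Function_Algebras" "HOL-Library.FuncSet"
begin


definition fscale :: "'a::field \<Rightarrow> ('b \<Rightarrow> 'a) \<Rightarrow> ('b \<Rightarrow> 'a)" where
  "fscale c f = (\<lambda>x. c * f x)"

interpretation FV: vector_space "fscale :: 'a::field \<Rightarrow> ('b \<Rightarrow> 'a) \<Rightarrow> ('b \<Rightarrow> 'a)"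
  by unfold_locales (auto simp: fscale_def fun_eq_iff algebra_simps)

lemma sum_fun_apply: "(sum f A) x = (\<Sum>a\<in>A. f a x)"
  by (induction A rule: infinite_finite_induct) auto

lemma family_dependent:
  fixes v :: "'i \<Rightarrow> ('b \<Rightarrow> 'a::field)"
  assumes M: "finite M" and S: "finite S" and sp: "\<And>i. i \<in> M \<Longrightarrow> v i \<in> FV.span S"
    and card: "card S < card M"
  shows "\<exists>c. (\<exists>i\<in>M. c i \<noteq> 0) \<and> (\<forall>x. (\<Sum>i\<in>M. c i * v i x) = 0)"
proof (cases "inj_on v M")
  case False
  then obtain i j where ij: "i \<in> M" "j \<in> M" "i \<noteq> j" "v i = v j" unfolding inj_on_def by blast
  define c where "c k = (if k = i then 1 else if k = j then -1 else (0::'a))" for k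
  have "(\<Sum>k\<in>M. c k * v k x) = 0" for x
  proof -
    have "(\<Sum>k\<in>M. c k * v k x) = (\<Sum>k\<in>{i,j}. c k * v k x)"
      by (rule sum.mono_neutral_right) (use M ij in \<open>auto simp: c_def\<close>)
    also have "\<dots> = 0" using ij by (simp add: c_def)
    finally show ?thesis .
  qed
  moreover have "c i \<noteq> 0" by (simp add: c_def)
  ultimately show ?thesis using ij by blast
next
  case True
  have "FV.dependent (v ` M)"
  proof (rule ccontr)
    assume "FV.independent (v ` M)"
    from FV.independent_span_bound[OF S this] sp have "card (v ` M) \<le> card S" by blast
    with card_image[OF True] card show False by simp
  qed
  then obtain T u where T: "finite T" "T \<subseteq> v ` M" "(\<Sum>w\<in>T. fscale (u w) w) = 0" "\<exists>w\<in>T. u w \<noteq> 0"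
    unfolding FV.dependent_explicit by blast
  define c where "c i = (if v i \<in> T then u (v i) else 0)" for i
  have T': "T = v ` (M \<inter> v -` T)" using T(2) by blast
  have inj': "inj_on v (M \<inter> v -` T)" using True by (rule inj_on_subset) auto
  have "(\<Sum>i\<in>M. c i * v i x) = 0" for x
  proof -
    have "(\<Sum>i\<in>M. c i * v i x) = (\<Sum>i\<in>M \<inter> v -` T. u (v i) * v i x)"
      by (rule sum.mono_neutral_cong_right) (use M in \<open>auto simp: c_def\<close>)
    also have "\<dots> = (\<Sum>w\<in>T. u w * w x)"
      by (subst T', subst sum.reindex[OF inj']) simp
    also have "\<dots> = (\<Sum>w\<in>T. fscale (u w) w) x" by (simp add: sum_fun_apply fscale_def)
    also have "\<dots> = 0" using T(3) by simp
    finally show ?thesis .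
  qed
  moreover obtain w where "w \<in> T" "u w \<noteq> 0" using T(4) by blast
  then obtain i where "i \<in> M" "v i = w" using T(2) by blast
  then have "c i \<noteq> 0" using \<open>w \<in> T\<close> \<open>u w \<noteq> 0\<close> by (simp add: c_def)
  ultimately show ?thesis using \<open>i \<in> M\<close> by blast
qed
definition mnm :: "nat \<Rightarrow> (nat \<Rightarrow> nat) \<Rightarrow> (nat \<Rightarrow> 'a::field) \<Rightarrow> 'a" where
  "mnm n \<nu> = (\<lambda>p. \<Prod>j<n. p j ^ \<nu> j)"

definition Bas :: "nat \<Rightarrow> nat \<Rightarrow> ((nat \<Rightarrow> 'a::field) \<Rightarrow> 'a) set" where
  "Bas n D = mnm n ` PiE {..<n} (\<lambda>_. {..D})"

definition Pol :: "nat \<Rightarrow> nat \<Rightarrow> ((nat \<Rightarrow> 'a::field) \<Rightarrow> 'a) set" where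
  "Pol n D = FV.span (Bas n D)"

lemma Bas_finite: "finite (Bas n D)"
  unfolding Bas_def by (intro finite_imageI finite_PiE) auto

lemma Bas_card: "card (Bas n D) \<le> (D+1)^n"
proof -
  have "card (Bas n D) \<le> card (PiE {..<n} (\<lambda>_::nat. {..D}))"
    unfolding Bas_def by (rule card_image_le) (intro finite_PiE, auto)
  also have "\<dots> = (D+1)^n" by (simp add: card_PiE)
  finally show ?thesis .
qed

lemma Pol_mono: "D \<le> D' \<Longrightarrow> Pol n D \<subseteq> Pol n D'"
  unfolding Pol_def Bas_def
  by (intro FV.span_mono image_mono PiE_mono) auto

lemma Pol_zero: "(\<lambda>p. 0) \<in> Pol n D"
  using FV.span_zero[of "Bas n D"] by (simp add: Pol_def zero_fun_def)

lemma Pol_add: "f \<in> Pol n D \<Longrightarrow> g \<in> Pol n D \<Longrightarrow> (\<lambda>p. f p + g p) \<in> Pol n D"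
  using FV.span_add[of f "Bas n D" g] by (simp add: Pol_def plus_fun_def)

lemma Pol_scale: "f \<in> Pol n D \<Longrightarrow> (\<lambda>p. c * f p) \<in> Pol n D"
  using FV.span_scale[of f "Bas n D" c] by (simp add: Pol_def fscale_def)

lemma Pol_sum: "finite I \<Longrightarrow> (\<And>i. i \<in> I \<Longrightarrow> f i \<in> Pol n D) \<Longrightarrow> (\<lambda>p. \<Sum>i\<in>I. f i p) \<in> Pol n D"
  by (induction I rule: finite_induct) (auto intro: Pol_zero Pol_add)

lemma Pol_const: "(\<lambda>p. c) \<in> Pol n D"
proof -
  have "mnm n (\<lambda>j\<in>{..<n}. 0) \<in> Bas n D" unfolding Bas_def by (intro imageI) (simp add: PiE_iff extensional_def)
  moreover have "mnm n (\<lambda>j\<in>{..<n}. 0) = (\<lambda>p. (1::'a))" by (simp add: mnm_def fun_eq_iff)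
  ultimately have "(\<lambda>p. (1::'a)) \<in> Pol n D" unfolding Pol_def using FV.span_base by metis
  from Pol_scale[OF this, of c] show ?thesis by simp
qed

lemma Pol_var: assumes j: "j < n" and that: "D \<ge> 1" shows "(\<lambda>p. p j) \<in> Pol n D"
proof -
  have "mnm n (\<lambda>i\<in>{..<n}. if i = j then 1 else 0) \<in> Bas n D" unfolding Bas_def
    using that by (intro imageI) (simp add: PiE_iff extensional_def)
  moreover have "mnm n (\<lambda>i\<in>{..<n}. if i = j then 1 else 0) = (\<lambda>p. p j :: 'a)"
  proof
    fix p :: "nat \<Rightarrow> 'a"
    have "(\<Prod>i<n. p i ^ (\<lambda>i\<in>{..<n}. if i = j then 1 else 0) i) = (\<Prod>i\<in>{j}. p i)"
      by (rule prod.mono_neutral_cong_right) (use j in auto)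
    then show "mnm n (\<lambda>i\<in>{..<n}. if i = j then 1 else 0) p = p j" by (simp add: mnm_def)
  qed
  ultimately show ?thesis unfolding Pol_def using FV.span_base by metis
qed

lemma Pol_mult_basis:
  assumes "f \<in> Bas n D1" "g \<in> Bas n D2"
  shows "(\<lambda>p. f p * g p) \<in> Pol n (D1 + D2)"
proof -
  obtain \<nu> \<nu>' where \<nu>: "\<nu> \<in> PiE {..<n} (\<lambda>_. {..D1})" "f = mnm n \<nu>"
    and \<nu>': "\<nu>' \<in> PiE {..<n} (\<lambda>_. {..D2})" "g = mnm n \<nu>'"
    using assms unfolding Bas_def by blast
  have "(\<lambda>j\<in>{..<n}. \<nu> j + \<nu>' j) \<in> PiE {..<n} (\<lambda>_. {..D1+D2})"
    using \<nu>(1) \<nu>'(1) by (auto simp: PiE_def Pi_def add_mono)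
  then have "mnm n (\<lambda>j\<in>{..<n}. \<nu> j + \<nu>' j) \<in> Bas n (D1+D2)" unfolding Bas_def by blast
  moreover have "mnm n (\<lambda>j\<in>{..<n}. \<nu> j + \<nu>' j) = (\<lambda>p. f p * g p)"
    by (simp add: \<nu>(2) \<nu>'(2) mnm_def fun_eq_iff power_add prod.distrib)
  ultimately show ?thesis unfolding Pol_def using FV.span_base by metis
qed

lemma Pol_mult:
  assumes "f \<in> Pol n D1" "g \<in> Pol n D2"
  shows "(\<lambda>p. f p * g p) \<in> Pol n (D1 + D2)"
proof -
  have basis: "(\<lambda>p. f p * g p) \<in> Pol n (D1 + D2)" if f: "f \<in> Bas n D1" and g: "g \<in> Pol n D2" for f g
    using g unfolding Pol_def[of n D2]
  proof (induction rule: FV.span_induct_alt)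
    case base
    then show ?case using Pol_zero by (simp add: zero_fun_def)
  next
    case (step c x y)
    have "(\<lambda>p. f p * (fscale c x + y) p) = (\<lambda>p. c * (f p * x p) + f p * y p)"
      by (simp add: fscale_def fun_eq_iff algebra_simps)
    moreover have "(\<lambda>p. c * (f p * x p) + f p * y p) \<in> Pol n (D1 + D2)"
      using Pol_add[OF Pol_scale[OF Pol_mult_basis[OF f step(1)]] step(2)] .
    ultimately show ?case by simp
  qed
  show ?thesis using assms(1) unfolding Pol_def[of n D1]
  proof (induction rule: FV.span_induct_alt)
    case base
    then show ?case using Pol_zero by (simp add: zero_fun_def)
  next
    case (step c x y)
    have "(\<lambda>p. (fscale c x + y) p * g p) = (\<lambda>p. c * (x p * g p) + y p * g p)"
      by (simp add: fscale_def fun_eq_iff algebra_simps)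
    moreover have "(\<lambda>p. c * (x p * g p) + y p * g p) \<in> Pol n (D1 + D2)"
      using Pol_add[OF Pol_scale[OF basis[OF step(1) assms(2)]] step(2)] .
    ultimately show ?case by simp
  qed
qed

lemma Pol_power: "f \<in> Pol n D \<Longrightarrow> (\<lambda>p. f p ^ k) \<in> Pol n (k * D)"
proof (induction k)
  case 0 then show ?case using Pol_const by simp
next
  case (Suc k)
  from Pol_mult[OF Suc.prems Suc.IH[OF Suc.prems]] show ?case by (simp add: add.commute)
qed

lemma Pol_prod: "finite I \<Longrightarrow> (\<And>i. i \<in> I \<Longrightarrow> f i \<in> Pol n (D i)) \<Longrightarrow> (\<lambda>p. \<Prod>i\<in>I. f i p) \<in> Pol n (\<Sum>i\<in>I. D i)"
proof (induction I rule: finite_induct)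
  case empty then show ?case using Pol_const by simp
next
  case (insert i I)
  from Pol_mult[OF insert.prems[of i] insert.IH] insert show ?case by simp
qed



definition qc :: "'a::field \<Rightarrow> nat \<Rightarrow> (nat \<Rightarrow> 'a) \<Rightarrow> nat \<Rightarrow> 'a" where
  "qc \<alpha> m p i = (if i = 0 then \<alpha> else if i < m then p (i-1) else if i = m then 1 else 0)"
definition gc :: "nat \<Rightarrow> nat \<Rightarrow> (nat \<Rightarrow> 'a::field) \<Rightarrow> nat \<Rightarrow> 'a" where
  "gc d m p j = (if j < d-m then p (m-1+j) else if j = d-m then 1 else 0)"
definition phi :: "'a::field \<Rightarrow> nat \<Rightarrow> nat \<Rightarrow> (nat \<Rightarrow> 'a) \<Rightarrow> nat \<Rightarrow> 'a" where
  "phi \<alpha> d m p k = (\<Sum>i\<le>k. qc \<alpha> m p i * gc d m p (k-i))"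

lemma coeff_monic_of: "coeff (monic_of d a) k = (if k = d then 1 else if k < d then a k else 0)"
proof -
  have "(\<Sum>i<d. coeff (monom (a i) i) k) = (if k < d then a k else 0)"
    by (simp add: sum.delta' lessThan_iff)
  then show ?thesis unfolding monic_of_def by (simp add: coeff_sum)
qed

lemma degree_monic_of: "degree (monic_of d a) = d" "lead_coeff (monic_of d a) = 1"
proof -
  have "degree (monic_of d a) \<le> d" by (rule degree_le) (simp add: coeff_monic_of)
  moreover have "d \<le> degree (monic_of d a)" by (rule le_degree) (simp add: coeff_monic_of)
  ultimately show "degree (monic_of d a) = d" by simp
  then show "lead_coeff (monic_of d a) = 1" by (simp add: coeff_monic_of)
qed

lemma calP_param:
  assumes "a \<in> calP d \<alpha>" "d \<ge> 2"
  shows "\<exists>m p. 1 \<le> m \<and> m \<le> d-1 \<and> (\<forall>k<d. a k = phi \<alpha> d m p k)"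
proof -
  obtain q where q: "q dvd monic_of d a" "lead_coeff q = 1" "1 \<le> degree q" "degree q \<le> d - 1" "coeff q 0 = \<alpha>"
    using assms(1) unfolding calP_def by blast
  obtain g where g: "monic_of d a = q * g" using q(1) by (auto elim: dvdE)
  have f0: "monic_of d a \<noteq> 0" using degree_monic_of(2)[of d a] by auto
  then have q0: "q \<noteq> 0" and g0: "g \<noteq> 0" using g by auto
  define m where "m = degree q"
  have dg: "degree g = d - m" using degree_mult_eq[OF q0 g0] g degree_monic_of(1)[of d a] m_def by simp
  have lg: "lead_coeff g = 1" using lead_coeff_mult[of q g] g degree_monic_of(2)[of d a] q(2) by simp
  define p where "p j = (if j < m-1 then coeff q (j+1) else coeff g (j-(m-1)))" for j
  have cq: "coeff q i = qc \<alpha> m p i" for i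
  proof -
    consider "i = 0" | "0 < i \<and> i < m" | "i = m" | "i > m" by linarith
    then show ?thesis
    proof cases
      case 2 then have "i - 1 < m - 1" by linarith
      with 2 show ?thesis by (simp add: qc_def p_def)
    next
      case 4 then show ?thesis by (simp add: qc_def coeff_eq_0 m_def)
    qed (use q m_def in \<open>auto simp: qc_def\<close>)
  qed
  have cg: "coeff g j = gc d m p j" for j
  proof -
    consider "j < d - m" | "j = d - m" | "j > d - m" by linarith
    then show ?thesis
    proof cases
      case 1 then show ?thesis by (simp add: gc_def p_def)
    next
      case 2 then show ?thesis using lg dg by (simp add: gc_def)
    next
      case 3 then show ?thesis using dg by (simp add: gc_def coeff_eq_0)
    qed
  qed
  have "a k = phi \<alpha> d m p k" if "k < d" for k
  proof -
    have "a k = coeff (monic_of d a) k" using that by (simp add: coeff_monic_of)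
    also have "\<dots> = phi \<alpha> d m p k" unfolding g coeff_mult phi_def cq cg ..
    finally show ?thesis .
  qed
  then show ?thesis using q(3,4) m_def by blast
qed



lemma phi_Pol:
  assumes "1 \<le> m" "m \<le> d - 1"
  shows "(\<lambda>p. phi \<alpha> d m p k) \<in> Pol (d-1) 2"
proof -
  have q: "(\<lambda>p. qc \<alpha> m p i) \<in> Pol (d-1) 1" for i
  proof -
    consider "i = 0" | "0 < i \<and> i < m" | "i = m" | "i > m" by linarith
    then show ?thesis
    proof cases
      case 1
      then have "(\<lambda>p. qc \<alpha> m p i) = (\<lambda>p. \<alpha>)" by (simp add: qc_def fun_eq_iff)
      then show ?thesis using Pol_const by metis
    next
      case 2
      then have "(\<lambda>p. qc \<alpha> m p i) = (\<lambda>p. p (i-1))" by (simp add: qc_def fun_eq_iff)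
      moreover have "i - 1 < d - 1" using 2 assms by linarith
      ultimately show ?thesis using Pol_var by auto
    next
      case 3
      then have "(\<lambda>p. qc \<alpha> m p i) = (\<lambda>p. 1)" using assms by (simp add: qc_def fun_eq_iff)
      then show ?thesis using Pol_const by metis
    next
      case 4
      then have "(\<lambda>p. qc \<alpha> m p i) = (\<lambda>p. 0)" using assms by (simp add: qc_def fun_eq_iff)
      then show ?thesis using Pol_const by metis
    qed
  qed
  have g: "(\<lambda>p. gc d m p j) \<in> Pol (d-1) 1" for j
  proof (cases "j < d - m")
    case True
    then have eq: "(\<lambda>p. gc d m p j) = (\<lambda>p. p (m-1+j))" by (simp add: gc_def fun_eq_iff)
    have lt: "m-1+j < d - 1" using True assms by linarith
    show ?thesis unfolding eq by (rule Pol_var[OF lt]) simp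
  next
    case False
    then have eq: "(\<lambda>p. gc d m p j) = (\<lambda>p. if j = d - m then 1 else 0)" by (simp add: gc_def fun_eq_iff)
    show ?thesis unfolding eq by (rule Pol_const)
  qed
  show ?thesis unfolding phi_def
  proof (rule Pol_sum)
    fix i
    show "(\<lambda>p. qc \<alpha> m p i * gc d m p (k - i)) \<in> Pol (d-1) 2"
      using Pol_mult[OF q[of i] g[of "k-i"]] by (simp only: one_add_one)
  qed simp
qed

definition Lf :: "nat \<Rightarrow> ((nat \<Rightarrow> 'a::field) \<Rightarrow> 'a) \<Rightarrow> (nat \<times> (nat \<Rightarrow> 'a) \<Rightarrow> 'a)" where
  "Lf m0 f = (\<lambda>(m,p). if m = m0 then f p else 0)"

lemma Lf_span: "f \<in> Pol n D \<Longrightarrow> Lf m0 f \<in> FV.span (Lf m0 ` Bas n D)"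
  unfolding Pol_def
proof (induction rule: FV.span_induct_alt)
  case base
  have "Lf m0 0 = 0" by (simp add: Lf_def fun_eq_iff)
  then show ?case using FV.span_zero by metis
next
  case (step c x y)
  have "Lf m0 (fscale c x + y) = fscale c (Lf m0 x) + Lf m0 y"
    by (auto simp: Lf_def fscale_def fun_eq_iff)
  moreover have "Lf m0 x \<in> Lf m0 ` Bas n D" using step(1) by (rule imageI)
  ultimately show ?case
    using FV.span_add[OF FV.span_scale[OF FV.span_base] step(2)] by metis
qed

lemma pow_aux: "(d::nat) \<ge> 1 \<Longrightarrow> (x::nat) * x^(d-1) = x^d"
  by (cases d) auto

lemma num_ineq:
  fixes d :: nat assumes "d \<ge> 1"
  defines "N \<equiv> d * (2*d+1)^(d-1)"
  shows "d * (2*d*N+1)^(d-1) < (N+1)^d"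
proof -
  have N1: "N \<ge> 1" using assms by (simp add: N_def)
  have "2*d*N+1 \<le> (2*d+1)*N" using N1 by (simp add: algebra_simps)
  then have "d * (2*d*N+1)^(d-1) \<le> d * ((2*d+1)*N)^(d-1)" by (simp add: power_mono)
  also have "\<dots> = (d*(2*d+1)^(d-1)) * N^(d-1)" by (simp only: power_mult_distrib mult.assoc)
  also have "\<dots> = N * N^(d-1)" by (simp add: N_def)
  also have "\<dots> = N^d" by (rule pow_aux[OF assms(1)])
  also have "\<dots> < (N+1)^d" using assms by (intro power_strict_mono) auto
  finally show ?thesis .
qed

definition toPM :: "nat \<Rightarrow> (nat \<Rightarrow> nat) \<Rightarrow> (nat \<Rightarrow>\<^sub>0 nat)" where
  "toPM d e = Abs_poly_mapping (\<lambda>i. if i < d then e i else 0)"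

lemma lookup_toPM: "Poly_Mapping.lookup (toPM d e) = (\<lambda>i. if i < d then e i else 0)"
proof -
  have "finite {i. (if i < d then e i else 0) \<noteq> 0}"
    by (rule finite_subset[of _ "{..<d}"]) auto
  then show ?thesis unfolding toPM_def by (rule lookup_Abs_poly_mapping)
qed

lemma toPM_inj: "inj_on (toPM d) (PiE {..<d} B)"
proof
  fix e e' assume e: "e \<in> PiE {..<d} B" "e' \<in> PiE {..<d} B" "toPM d e = toPM d e'"
  then have "Poly_Mapping.lookup (toPM d e) = Poly_Mapping.lookup (toPM d e')" by simp
  then have "\<forall>i<d. e i = e' i" unfolding lookup_toPM fun_eq_iff by metis
  then show "e = e'" using e(1,2) by (intro PiE_ext) auto
qed

theorem main:
  fixes \<alpha> :: "'a::field" and d :: nat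
  assumes "d \<ge> 2"
  shows "\<exists>H :: 'a mpoly. H \<noteq> 0 \<and> mpoly_in_vars d H \<and>
           (\<forall>a\<in>calP d \<alpha>. mpoly_eval H a = 0)"
proof -
  define N where "N = d * (2*d+1)^(d-1)"
  define n where "n = d - 1"
  define Dg where "Dg = 2*d*N"
  define E where "E = PiE {..<d} (\<lambda>_::nat. {..N})"
  define M where "M = toPM d ` E"
  define v :: "(nat \<Rightarrow>\<^sub>0 nat) \<Rightarrow> nat \<times> (nat \<Rightarrow> 'a) \<Rightarrow> 'a" where
    "v \<mu> = (\<lambda>(m,p). if m \<in> {1..<d} then \<Prod>i<d. phi \<alpha> d m p i ^ Poly_Mapping.lookup \<mu> i else 0)" for \<mu>
  define S :: "(nat \<times> (nat \<Rightarrow> 'a) \<Rightarrow> 'a) set" where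
    "S = (\<Union>m0\<in>{1..<d}. Lf m0 ` Bas n Dg)"
  have finE: "finite E" unfolding E_def by (intro finite_PiE) auto
  have finM: "finite M" unfolding M_def using finE by simp
  have finS: "finite S" unfolding S_def using Bas_finite by auto
  have cardM: "card M = (N+1)^d"
    unfolding M_def E_def by (subst card_image[OF toPM_inj]) (simp add: card_PiE)
  have "card S \<le> (\<Sum>m0\<in>{1..<d}. card (Lf m0 ` (Bas n Dg :: ((nat \<Rightarrow> 'a) \<Rightarrow> 'a) set)))"
    unfolding S_def by (rule card_UN_le) simp
  also have "\<dots> \<le> (\<Sum>m0\<in>{1..<d}. (Dg+1)^n)"
    by (intro sum_mono order.trans[OF card_image_le Bas_card] Bas_finite)
  also have "\<dots> \<le> d * (2*d*N+1)^(d-1)" by (simp add: Dg_def n_def)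
  also have "\<dots> < (N+1)^d" using num_ineq[of d] assms by (simp add: N_def)
  finally have cardSM: "card S < card M" using cardM by simp
  have lkE: "\<exists>e. e \<in> E \<and> \<mu> = toPM d e" if "\<mu> \<in> M" for \<mu>
    using that unfolding M_def by blast
  have lk1: "Poly_Mapping.lookup \<mu> i \<le> N" if mu: "\<mu> \<in> M" for \<mu> i
  proof -
    obtain e where e: "e \<in> E" "\<mu> = toPM d e" using lkE[OF mu] by blast
    show ?thesis
    proof (cases "i < d")
      case True
      then have "e i \<in> {..N}" using PiE_mem[OF e(1)[unfolded E_def], of i] by simp
      then show ?thesis using True by (simp add: e(2) lookup_toPM)
    next
      case False
      then show ?thesis by (simp add: e(2) lookup_toPM)
    qed
  qed
  have lk2: "Poly_Mapping.lookup \<mu> i = 0" if mu: "\<mu> \<in> M" "i \<ge> d" for \<mu> i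
  proof -
    obtain e where e: "e \<in> E" "\<mu> = toPM d e" using lkE[OF mu(1)] by blast
    show ?thesis using mu(2) by (simp add: e(2) lookup_toPM)
  qed
  note lk = lk1 lk2
  have sp: "v \<mu> \<in> FV.span S" if \<mu>: "\<mu> \<in> M" for \<mu>
  proof -
    define w where "w m0 = (\<lambda>p. \<Prod>i<d. phi \<alpha> d m0 p i ^ Poly_Mapping.lookup \<mu> i)" for m0
    have "v \<mu> = (\<Sum>m0\<in>{1..<d}. Lf m0 (w m0))"
    proof (rule ext)
      fix x :: "nat \<times> (nat \<Rightarrow> 'a)"
      obtain m p where x: "x = (m,p)" by (cases x) blast
      have "(\<Sum>m0\<in>{1..<d}. Lf m0 (w m0)) x = (\<Sum>m0\<in>{1..<d}. Lf m0 (w m0) (m,p))"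
        unfolding x by (rule sum_fun_apply)
      also have "\<dots> = (\<Sum>m0\<in>{1..<d}. if m = m0 then w m0 p else 0)"
        by (rule sum.cong[OF refl]) (simp add: Lf_def)
      also have "\<dots> = (if m \<in> {1..<d} then w m p else 0)"
        by (rule sum.delta') simp
      also have "\<dots> = v \<mu> x" unfolding x v_def w_def by simp
      finally show "v \<mu> x = (\<Sum>m0\<in>{1..<d}. Lf m0 (w m0)) x" by simp
    qed
    also have "\<dots> \<in> FV.span S"
    proof (rule FV.span_sum)
      fix m0 assume m0: "m0 \<in> {1..<d}"
      have "w m0 \<in> Pol n (\<Sum>i<d. Poly_Mapping.lookup \<mu> i * 2)" unfolding w_def
      proof (rule Pol_prod)
        fix i
        have "(\<lambda>p. phi \<alpha> d m0 p i) \<in> Pol (d-1) 2" by (rule phi_Pol) (use m0 in auto)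
        from Pol_power[OF this, of "Poly_Mapping.lookup \<mu> i"]
        show "(\<lambda>p. phi \<alpha> d m0 p i ^ Poly_Mapping.lookup \<mu> i) \<in> Pol n (Poly_Mapping.lookup \<mu> i * 2)"
          by (simp add: n_def)
      qed simp
      also have "\<dots> \<subseteq> Pol n Dg"
      proof (rule Pol_mono)
        have "(\<Sum>i<d. Poly_Mapping.lookup \<mu> i * 2) \<le> (\<Sum>i<d. N * 2)" by (intro sum_mono) (use lk[OF \<mu>] in auto)
        then show "(\<Sum>i<d. Poly_Mapping.lookup \<mu> i * 2) \<le> Dg" by (simp add: Dg_def)
      qed
      finally have "Lf m0 (w m0) \<in> FV.span (Lf m0 ` Bas n Dg)" by (rule Lf_span)
      also have "\<dots> \<subseteq> FV.span S" by (rule FV.span_mono) (use m0 in \<open>auto simp: S_def\<close>)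
      finally show "Lf m0 (w m0) \<in> FV.span S" .
    qed
    finally show ?thesis .
  qed
  obtain c where c: "\<exists>\<mu>\<in>M. c \<mu> \<noteq> 0" "\<forall>x. (\<Sum>\<mu>\<in>M. c \<mu> * v \<mu> x) = 0"
    using family_dependent[of M S v, OF finM finS sp cardSM] by blast
  define H :: "'a mpoly" where "H = Abs_poly_mapping (\<lambda>\<mu>. if \<mu> \<in> M then c \<mu> else 0)"
  have lH: "Poly_Mapping.lookup H = (\<lambda>\<mu>. if \<mu> \<in> M then c \<mu> else 0)"
  proof -
    have "finite {\<mu>. (if \<mu> \<in> M then c \<mu> else 0) \<noteq> 0}"
      by (rule finite_subset[OF _ finM]) auto
    then show ?thesis unfolding H_def by (rule lookup_Abs_poly_mapping)
  qed
  have lH': "Poly_Mapping.lookup H \<mu> = (if \<mu> \<in> M then c \<mu> else 0)" for \<mu>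
    unfolding lH ..
  have kH: "Poly_Mapping.keys H \<subseteq> M"
  proof
    fix \<mu> assume "\<mu> \<in> Poly_Mapping.keys H"
    then have "Poly_Mapping.lookup H \<mu> \<noteq> 0" by (simp del: lookup_not_eq_zero_eq_in_keys add: in_keys_iff)
    then show "\<mu> \<in> M" unfolding lH' by (cases "\<mu> \<in> M") simp_all
  qed
  obtain \<mu>0 where \<mu>0: "\<mu>0 \<in> M" "c \<mu>0 \<noteq> 0" using c(1) by blast
  have "H \<noteq> 0"
  proof
    assume "H = 0"
    then have "Poly_Mapping.lookup H \<mu>0 = 0" by simp
    then show False using \<mu>0 unfolding lH' by simp
  qed
  moreover have "mpoly_in_vars d H"
    unfolding mpoly_in_vars_def
  proof
    fix \<mu> assume "\<mu> \<in> Poly_Mapping.keys H"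
    then have \<mu>: "\<mu> \<in> M" using kH by blast
    show "Poly_Mapping.keys \<mu> \<subseteq> {..<d}"
    proof
      fix i assume "i \<in> Poly_Mapping.keys \<mu>"
      then have "Poly_Mapping.lookup \<mu> i \<noteq> 0" by (simp del: lookup_not_eq_zero_eq_in_keys add: in_keys_iff)
      then have "\<not> d \<le> i" using lk2[OF \<mu>, of i] by auto
      then show "i \<in> {..<d}" by simp
    qed
  qed
  moreover have "mpoly_eval H a = 0" if a: "a \<in> calP d \<alpha>" for a
  proof -
    obtain m p where mp: "1 \<le> m" "m \<le> d-1" "\<forall>k<d. a k = phi \<alpha> d m p k"
      using calP_param[OF a assms] by blast
    have "mpoly_eval H a = (\<Sum>\<mu>\<in>M. c \<mu> * (\<Prod>i\<in>Poly_Mapping.keys \<mu>. a i ^ Poly_Mapping.lookup \<mu> i))"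
      unfolding mpoly_eval_def
    proof (rule sum.mono_neutral_cong_left[OF finM kH])
      show "\<forall>\<mu>\<in>M - Poly_Mapping.keys H. c \<mu> * (\<Prod>i\<in>Poly_Mapping.keys \<mu>. a i ^ Poly_Mapping.lookup \<mu> i) = 0"
      proof
        fix \<mu> assume "\<mu> \<in> M - Poly_Mapping.keys H"
        then have "\<mu> \<in> M" "\<mu> \<notin> Poly_Mapping.keys H" by auto
        then have "Poly_Mapping.lookup H \<mu> = 0" by (simp del: lookup_not_eq_zero_eq_in_keys add: in_keys_iff)
        then have "c \<mu> = 0" using \<open>\<mu> \<in> M\<close> lH'[of \<mu>] by simp
        then show "c \<mu> * (\<Prod>i\<in>Poly_Mapping.keys \<mu>. a i ^ Poly_Mapping.lookup \<mu> i) = 0" by simp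
      qed
      show "\<And>\<mu>. \<mu> \<in> Poly_Mapping.keys H \<Longrightarrow> Poly_Mapping.lookup H \<mu> * (\<Prod>i\<in>Poly_Mapping.keys \<mu>. a i ^ Poly_Mapping.lookup \<mu> i) = c \<mu> * (\<Prod>i\<in>Poly_Mapping.keys \<mu>. a i ^ Poly_Mapping.lookup \<mu> i)"
        using kH lH' by auto
    qed
    also have "\<dots> = (\<Sum>\<mu>\<in>M. c \<mu> * v \<mu> (m,p))"
    proof (rule sum.cong[OF refl])
      fix \<mu> assume \<mu>: "\<mu> \<in> M"
      have "(\<Prod>i\<in>Poly_Mapping.keys \<mu>. a i ^ Poly_Mapping.lookup \<mu> i) = (\<Prod>i<d. a i ^ Poly_Mapping.lookup \<mu> i)"
      proof (rule prod.mono_neutral_left)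
        show "Poly_Mapping.keys \<mu> \<subseteq> {..<d}"
        proof
          fix i assume "i \<in> Poly_Mapping.keys \<mu>"
          then have "Poly_Mapping.lookup \<mu> i \<noteq> 0" by (simp del: lookup_not_eq_zero_eq_in_keys add: in_keys_iff)
          then have "\<not> d \<le> i" using lk2[OF \<mu>, of i] by auto
          then show "i \<in> {..<d}" by simp
        qed
        show "\<forall>i\<in>{..<d} - Poly_Mapping.keys \<mu>. a i ^ Poly_Mapping.lookup \<mu> i = 1"
          by (simp del: lookup_not_eq_zero_eq_in_keys add: in_keys_iff)
      qed simp
      also have "\<dots> = (\<Prod>i<d. phi \<alpha> d m p i ^ Poly_Mapping.lookup \<mu> i)"
        by (rule prod.cong[OF refl]) (use mp(3) in simp)
      also have "\<dots> = v \<mu> (m,p)" unfolding v_def using mp(1,2) assms by simp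
      finally show "c \<mu> * (\<Prod>i\<in>Poly_Mapping.keys \<mu>. a i ^ Poly_Mapping.lookup \<mu> i) = c \<mu> * v \<mu> (m,p)" by simp
    qed
    also have "\<dots> = 0" using c(2) by blast
    finally show ?thesis .
  qed
  ultimately show ?thesis by blast
qed


theorem theorem2p1:
  fixes \<alpha> :: "'a::field" and d :: nat
  assumes "d \<ge> 2"
  shows "\<exists>H :: 'a mpoly. H \<noteq> 0 \<and> mpoly_in_vars d H \<and>
           (\<forall>a\<in>calP d \<alpha>. mpoly_eval H a = 0)"
  using main[OF assms] .

end
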